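(* Assume $f$ is odd. Then the representation $\operatorname{Ind}_{C_6\rtimes\mathbb{Z}}^{Q\rtimes\mathbb{Z}}\phi_2$ is irreducible, and there exists a surjective homomorphism of $Q\rtimes\mathbb{Z}$-representations \[ \Psi\colon \operatorname{Ind}_{C}^{Q\rtimes\mathbb{Z}}\phi_1\longrightarrow \operatorname{Ind}_{C_6\rtimes\mathbb{Z}}^{Q\rtimes\mathbb{Z}}\phi_2 . \]
   Context: All representations are over $\overline{\mathbb{Q}}_\ell$, $\ell$ an odd prime. Let $q=2^f$. Let $Q=\{g(\alpha,\beta,\gamma)\}\subset \mathit{GL}_3(\mathbb{F}_4)$ be the group of upper triangular matrices $g(\alpha,\beta,\gamma)=\begin{pmatrix}\alpha&\beta&\gamma\\0&\alpha^2&\beta^2\\0&0&\alpha\end{pmatrix}$ with $\alpha\in\mathbb{F}_4^\times$, $\beta,\gamma\in\mathbb{F}_4$ and $\alpha\gamma^2+\alpha^2\gamma=\beta^3$ (a group of order 24). Let $Q\rtimes\mathbb{Z}$ be the semidirect product where $r\in\mathbb{Z}$ acts on $Q$ by $g(\alpha,\beta,\gamma)\mapsto g(\alpha^{q^r},\beta^{q^r},\gamma^{q^r})$. Fix $\bar\zeta_3\in\mathbb{F}_4\setminus\mathbb{F}_2$. Let $Q_8=\{g(1,\beta,\gamma)\in Q\}$; let $C_4\subset Q_8$ be the cyclic subgroup of order 4 generated by $g(1,1,\bar\zeta_3)$; let $Z=\{g(1,0,0),g(1,0,1)\}$ (the center of $Q$); let $C_3=\{g(\alpha,0,0)\}$ and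 $C_6=Z\times C_3$. Fix a faithful character $\phi$ of $C_4$ and a square root $(-2)^{1/2}\in\overline{\mathbb{Q}}_\ell$; write $(-2)^{m/2}=((-2)^{1/2})^m$. Let $C\subset Q_8\rtimes\mathbb{Z}$ be the subgroup of $(g,n)$ with $g\in C_4$ if $n$ is even and $g\in Q_8\setminus C_4$ if $n$ is odd. Fix $\eta\in\overline{\mathbb{Q}}_\ell$ with $\eta^2+(-2)^{(f+1)/2}\eta+q=0$. Let $\phi_1$ be the character of $C$ with $\phi_1((g(1,\bar\zeta_3,\bar\zeta_3),1))=\eta q^{-1}$ and $\phi_1((g(1,0,0),2))=-q^{-1}$ (these two elements generate $C$). Let $\phi_2$ be the character of $C_6\rtimes\mathbb{Z}$ with $\phi_2|_{C_6}=\phi|_Z\otimes 1_{C_3}$ and $\phi_2((g(1,0,0),1))=(-2)^{f/2}q^{-1}$. *)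

theory Defs
  imports "HOL-Computational_Algebra.Polynomial"
begin

section \<open>The field F_4 = {0, 1, zeta, zeta^2} with zeta^2 = zeta + 1\<close>

datatype F4 = F0 | F1 | Zt | Zt2

fun f4add :: "F4 \<Rightarrow> F4 \<Rightarrow> F4" where
  "f4add F0 y = y"
| "f4add x F0 = x"
| "f4add F1 F1 = F0"
| "f4add F1 Zt = Zt2"
| "f4add F1 Zt2 = Zt"
| "f4add Zt F1 = Zt2"
| "f4add Zt Zt = F0"
| "f4add Zt Zt2 = F1"
| "f4add Zt2 F1 = Zt"
| "f4add Zt2 Zt = F1"
| "f4add Zt2 Zt2 = F0"

fun f4mul :: "F4 \<Rightarrow> F4 \<Rightarrow> F4" where
  "f4mul F0 y = F0"
| "f4mul x F0 = F0"
| "f4mul F1 y = y"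
| "f4mul x F1 = x"
| "f4mul Zt Zt = Zt2"
| "f4mul Zt Zt2 = F1"
| "f4mul Zt2 Zt = F1"
| "f4mul Zt2 Zt2 = Zt"

definition frob :: "F4 \<Rightarrow> F4" where "frob x = f4mul x x"

text \<open>x \<mapsto> x^(q^r) for q = 2^f and r an integer (for r < 0 the inverse map).\<close>
definition tw :: "nat \<Rightarrow> int \<Rightarrow> F4 \<Rightarrow> F4" where
  "tw f r x = (if 0 \<le> r then (frob ^^ (f * nat r)) x else inv (frob ^^ (f * nat (- r))) x)"

section \<open>3x3 matrices over F_4 (entries with indices \<ge> 3 are 0)\<close>

type_synonym mat3 = "nat \<Rightarrow> nat \<Rightarrow> F4"

definition mmul :: "mat3 \<Rightarrow> mat3 \<Rightarrow> mat3" where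
  "mmul A B = (\<lambda>i j. if i < 3 \<and> j < 3 then
      f4add (f4add (f4mul (A i 0) (B 0 j)) (f4mul (A i 1) (B 1 j))) (f4mul (A i 2) (B 2 j))
    else F0)"

definition gmat :: "F4 \<Rightarrow> F4 \<Rightarrow> F4 \<Rightarrow> mat3" where
  "gmat a b c = (\<lambda>i j.
     if i = 0 \<and> j = 0 then a else if i = 0 \<and> j = 1 then b else if i = 0 \<and> j = 2 then c
     else if i = 1 \<and> j = 1 then f4mul a a else if i = 1 \<and> j = 2 then f4mul b b
     else if i = 2 \<and> j = 2 then a else F0)"

definition Qcond :: "F4 \<Rightarrow> F4 \<Rightarrow> F4 \<Rightarrow> bool" where
  "Qcond a b c \<longleftrightarrow> a \<noteq> F0 \<and>
     f4add (f4mul a (f4mul c c)) (f4mul (f4mul a a) c) = f4mul b (f4mul b b)"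

definition Qgrp :: "mat3 set" where
  "Qgrp = {gmat a b c | a b c. Qcond a b c}"

definition twmat :: "nat \<Rightarrow> int \<Rightarrow> mat3 \<Rightarrow> mat3" where
  "twmat f r A = (\<lambda>i j. tw f r (A i j))"

type_synonym elt = "mat3 \<times> int"

definition QZ :: "elt set" where "QZ = Qgrp \<times> UNIV"

definition gmul :: "nat \<Rightarrow> elt \<Rightarrow> elt \<Rightarrow> elt" where
  "gmul f x y = (mmul (fst x) (twmat f (snd x) (fst y)), snd x + snd y)"

definition Q8 :: "mat3 set" where "Q8 = {A \<in> Qgrp. A 0 0 = F1}"

definition C4 :: "F4 \<Rightarrow> mat3 set" where
  "C4 z = {((\<lambda>A. mmul (gmat F1 F1 z) A) ^^ n) (gmat F1 F0 F0) | n. True}"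

definition Zc :: "mat3 set" where "Zc = {gmat F1 F0 F0, gmat F1 F0 F1}"

definition C3 :: "mat3 set" where "C3 = {gmat a F0 F0 | a. a \<noteq> F0}"

definition C6 :: "mat3 set" where "C6 = {mmul x y | x y. x \<in> Zc \<and> y \<in> C3}"

definition Csub :: "F4 \<Rightarrow> elt set" where
  "Csub z = {(g, n) | g n. g \<in> Q8 \<and> (even n \<longrightarrow> g \<in> C4 z) \<and> (odd n \<longrightarrow> g \<notin> C4 z)}"

definition C6Z :: "elt set" where "C6Z = C6 \<times> UNIV"

definition is_char :: "'g set \<Rightarrow> ('g \<Rightarrow> 'g \<Rightarrow> 'g) \<Rightarrow> ('g \<Rightarrow> 'k::field) \<Rightarrow> bool" where
  "is_char H mul \<chi> \<longleftrightarrow> (\<forall>x\<in>H. \<chi> x \<noteq> 0) \<and> (\<forall>x\<in>H. \<forall>y\<in>H. \<chi> (mul x y) = \<chi> x * \<chi> y)"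

definition Ind :: "'g set \<Rightarrow> ('g \<Rightarrow> 'g \<Rightarrow> 'g) \<Rightarrow> 'g set \<Rightarrow> ('g \<Rightarrow> 'k::field) \<Rightarrow> ('g \<Rightarrow> 'k) set" where
  "Ind G mul H \<chi> = {F. (\<forall>x. x \<notin> G \<longrightarrow> F x = 0) \<and> (\<forall>h\<in>H. \<forall>x\<in>G. F (mul h x) = \<chi> h * F x)}"

definition ract :: "'g set \<Rightarrow> ('g \<Rightarrow> 'g \<Rightarrow> 'g) \<Rightarrow> 'g \<Rightarrow> ('g \<Rightarrow> 'k::field) \<Rightarrow> ('g \<Rightarrow> 'k)" where
  "ract G mul g F = (\<lambda>x. if x \<in> G then F (mul x g) else 0)"

definition is_subspace :: "('g \<Rightarrow> 'k::field) set \<Rightarrow> bool" where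
  "is_subspace W \<longleftrightarrow> (\<lambda>_. 0) \<in> W \<and> (\<forall>F\<in>W. \<forall>F'\<in>W. (\<lambda>x. F x + F' x) \<in> W)
     \<and> (\<forall>c. \<forall>F\<in>W. (\<lambda>x. c * F x) \<in> W)"

definition irreducible_rep :: "'g set \<Rightarrow> ('g \<Rightarrow> 'g \<Rightarrow> 'g) \<Rightarrow> ('g \<Rightarrow> 'k::field) set \<Rightarrow> bool" where
  "irreducible_rep G mul V \<longleftrightarrow> V \<noteq> {\<lambda>_. 0} \<and>
     (\<forall>W. is_subspace W \<and> W \<subseteq> V \<and> (\<forall>g\<in>G. \<forall>F\<in>W. ract G mul g F \<in> W)
        \<longrightarrow> W = {\<lambda>_. 0} \<or> W = V)"

definition rep_hom :: "'g set \<Rightarrow> ('g \<Rightarrow> 'g \<Rightarrow> 'g) \<Rightarrow> ('g \<Rightarrow> 'k::field) set \<Rightarrow> ('g \<Rightarrow> 'k) set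
    \<Rightarrow> (('g \<Rightarrow> 'k) \<Rightarrow> ('g \<Rightarrow> 'k)) \<Rightarrow> bool" where
  "rep_hom G mul V1 V2 \<Psi> \<longleftrightarrow> (\<forall>F\<in>V1. \<Psi> F \<in> V2)
     \<and> (\<forall>F\<in>V1. \<forall>F'\<in>V1. \<Psi> (\<lambda>x. F x + F' x) = (\<lambda>x. \<Psi> F x + \<Psi> F' x))
     \<and> (\<forall>c. \<forall>F\<in>V1. \<Psi> (\<lambda>x. c * F x) = (\<lambda>x. c * \<Psi> F x))
     \<and> (\<forall>g\<in>G. \<forall>F\<in>V1. \<Psi> (ract G mul g F) = ract G mul g (\<Psi> F))"

definition alg_closed :: "'k::field itself \<Rightarrow> bool" where
  "alg_closed _ \<longleftrightarrow> (\<forall>p :: 'k poly. 0 < degree p \<longrightarrow> (\<exists>x. poly p x = 0))"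

end

theory Submission
  imports Defs
begin

lemma f4add_assoc: "f4add (f4add a b) c = f4add a (f4add b c)" by (cases a; cases b; cases c) simp_all
lemma f4add_comm: "f4add a b = f4add b a" by (cases a; cases b) simp_all
lemma f4add_self: "f4add a a = F0" by (cases a) simp_all
lemma f4add_0: "f4add F0 a = a" by (cases a) simp_all
lemma f4mul_assoc: "f4mul (f4mul a b) c = f4mul a (f4mul b c)" by (cases a; cases b; cases c) simp_all
lemma f4mul_comm: "f4mul a b = f4mul b a" by (cases a; cases b) simp_all
lemma f4mul_1: "f4mul F1 a = a" by (cases a) simp_all
lemma f4distr: "f4mul (f4add a b) c = f4add (f4mul a c) (f4mul b c)" by (cases a; cases b; cases c) simp_all
lemma f4inv: "a \<noteq> F0 \<Longrightarrow> f4mul (f4mul a a) a = F1" by (cases a) simp_all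

instantiation F4 :: field
begin
definition zero_F4_def: "0 = F0"
definition one_F4_def: "1 = F1"
definition plus_F4_def: "x + (y::F4) = f4add x y"
definition times_F4_def: "x * (y::F4) = f4mul x y"
definition uminus_F4_def: "- x = (x::F4)"
definition minus_F4_def: "x - (y::F4) = f4add x y"
definition inverse_F4_def: "inverse (x::F4) = f4mul x x"
definition divide_F4_def: "divide x (y::F4) = f4mul x (f4mul y y)"
instance
  apply standard
  unfolding zero_F4_def one_F4_def plus_F4_def times_F4_def uminus_F4_def minus_F4_def inverse_F4_def divide_F4_def
  by (simp_all add: f4add_assoc f4add_comm f4add_self f4add_0 f4mul_assoc f4mul_comm f4mul_1 f4distr f4inv,
      (metis f4add_assoc f4add_comm f4add_0 f4mul_assoc f4mul_comm f4mul_1 f4distr f4inv)+)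
end

instance F4 :: finite
proof
  have "UNIV = {F0, F1, Zt, Zt2}" by (auto intro: F4.exhaust)
  then show "finite (UNIV :: F4 set)" by (metis finite.emptyI finite_insert)
qed


lemma F0_eq: "F0 = 0" by (simp add: zero_F4_def)
lemma F1_eq: "F1 = 1" by (simp add: one_F4_def)
lemma f4add_eq: "f4add x y = x + y" by (simp add: plus_F4_def)
lemma f4mul_eq: "f4mul x y = x * y" by (simp add: times_F4_def)

lemma Zt_sq[simp]: "Zt * Zt = Zt2" by (simp add: times_F4_def)
lemma Zt_Zt2[simp]: "Zt * Zt2 = 1" by (simp add: times_F4_def one_F4_def)
lemma Zt2_Zt[simp]: "Zt2 * Zt = 1" by (simp add: times_F4_def one_F4_def)
lemma Zt2_sq[simp]: "Zt2 * Zt2 = Zt" by (simp add: times_F4_def)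
lemma add_tab[simp]: "1 + Zt = Zt2" "Zt + 1 = Zt2" "1 + Zt2 = Zt" "Zt2 + 1 = Zt" "Zt + Zt2 = 1" "Zt2 + Zt = 1"
  by (simp_all add: plus_F4_def one_F4_def)
lemma neq_tab[simp]: "Zt \<noteq> 0" "Zt2 \<noteq> 0" "Zt \<noteq> 1" "Zt2 \<noteq> 1" "Zt \<noteq> Zt2" "Zt2 \<noteq> Zt"
  "0 \<noteq> Zt" "0 \<noteq> Zt2" "1 \<noteq> Zt" "1 \<noteq> Zt2"
  by (simp_all add: zero_F4_def one_F4_def)
lemma F4_cases: "(x::F4) = 0 \<or> x = 1 \<or> x = Zt \<or> x = Zt2"
  by (cases x) (simp_all add: zero_F4_def one_F4_def)
lemma add_self_F4[simp]: "(x::F4) + x = 0"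
  by (simp add: plus_F4_def zero_F4_def f4add_self)
lemma add_self_F4'[simp]: "(x::F4) + (x + y) = y"
  by (simp add: add.assoc[symmetric])
lemma two_F4[simp]: "(2::F4) = 0"
  by (metis add_self_F4 one_add_one)
lemma pow4_F4: "(x::F4) * x * x * x = x"
  using F4_cases[of x] by auto
lemma pow3_F4: "(x::F4) \<noteq> 0 \<Longrightarrow> x * x * x = 1"
  using F4_cases[of x] by auto

definition frb :: "F4 \<Rightarrow> F4" where "frb x = x * x"
lemma frob_eq: "frob = frb" by (rule ext) (simp add: frob_def frb_def f4mul_eq)
lemma frb_frb: "frb (frb x) = x" unfolding frb_def using pow4_F4[of x] by (simp add: mult.assoc)
lemma frb_iter: "(frb ^^ n) x = (if even n then x else frb x)"
  by (induction n) (auto simp: frb_frb)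
lemma inv_frb: "inv frb = frb"
  by (metis frb_frb inv_equality)


definition tw' :: "int \<Rightarrow> F4 \<Rightarrow> F4" where "tw' r x = (if odd r then frb x else x)"

lemma frb_pow_fun: "frb ^^ n = (if even n then id else frb)"
  by (rule ext) (simp add: frb_iter)

lemma tw_eq: assumes "odd f" shows "tw f r x = tw' r x"
proof (cases "0 \<le> r")
  case True
  have "odd (f * nat r) \<longleftrightarrow> odd r" using assms True
    by (simp add: even_nat_iff)
  then show ?thesis using True by (auto simp: tw_def tw'_def frob_eq frb_iter simp del: even_mult_iff)
next
  case False
  have "odd (f * nat (-r)) \<longleftrightarrow> odd r" using assms False
    by (simp add: even_nat_iff)
  then show ?thesis using False by (auto simp: tw_def tw'_def frob_eq frb_pow_fun inv_frb simp del: even_mult_iff)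
qed

lemma tw'_mult: "tw' r (x * y) = tw' r x * tw' r y" by (simp add: tw'_def frb_def algebra_simps)
lemma tw'_add: "tw' r (x + y) = tw' r x + tw' r y"
  by (simp add: tw'_def frb_def algebra_simps)
lemma tw'_0[simp]: "tw' r 0 = 0" by (simp add: tw'_def frb_def)
lemma tw'_1[simp]: "tw' r 1 = 1" by (simp add: tw'_def frb_def)
lemma tw'_tw': "tw' r (tw' m x) = tw' (r + m) x" by (simp add: tw'_def frb_frb)
lemma tw'_0': "tw' r x = 0 \<longleftrightarrow> x = 0" by (simp add: tw'_def frb_def)
lemma tw'_even[simp]: "even r \<Longrightarrow> tw' r x = x" by (simp add: tw'_def)
lemma tw'_Zt: "tw' r Zt = (if odd r then Zt2 else Zt)" by (simp add: tw'_def frb_def)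
lemma tw'_Zt2: "tw' r Zt2 = (if odd r then Zt else Zt2)" by (simp add: tw'_def frb_def)


lemma mmul_alt: "mmul A B = (\<lambda>i j. if i < 3 \<and> j < 3 then A i 0 * B 0 j + A i 1 * B 1 j + A i 2 * B 2 j else 0)"
  unfolding mmul_def f4add_eq f4mul_eq F0_eq by (rule refl)

lemma mmul_assoc: "mmul A (mmul B C) = mmul (mmul A B) C"
  apply (rule ext)+
  apply (simp add: mmul_alt)
  apply algebra
  done

lemma twmat_alt: "odd f \<Longrightarrow> twmat f r A = (\<lambda>i j. tw' r (A i j))"
  by (simp add: twmat_def tw_eq)

lemma twmat_mmul: "odd f \<Longrightarrow> twmat f r (mmul A B) = mmul (twmat f r A) (twmat f r B)"
  by (rule ext)+ (simp add: twmat_alt mmul_alt tw'_add tw'_mult)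

lemma twmat_twmat: "odd f \<Longrightarrow> twmat f r (twmat f m A) = twmat f (r + m) A"
  by (simp add: twmat_alt tw'_tw')

lemma gmat_alt: "gmat a b c = (\<lambda>i j.
     if i = 0 \<and> j = 0 then a else if i = 0 \<and> j = 1 then b else if i = 0 \<and> j = 2 then c
     else if i = 1 \<and> j = 1 then a * a else if i = 1 \<and> j = 2 then b * b
     else if i = 2 \<and> j = 2 then a else 0)"
  unfolding gmat_def f4mul_eq F0_eq by (rule refl)

lemma twmat_gmat: "odd f \<Longrightarrow> twmat f r (gmat a b c) = gmat (tw' r a) (tw' r b) (tw' r c)"
  by (rule ext)+ (simp add: twmat_alt gmat_alt tw'_mult)

lemma sq_add_F4: "((x::F4) + y) * (x + y) = x * x + y * y"
  using F4_cases[of x] F4_cases[of y] by auto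

lemma gmat_mul: "mmul (gmat a b c) (gmat a' b' c') = gmat (a * a') (a * b' + b * a' * a') (a * c' + b * b' * b' + c * a')"
proof -
  have p4: "b * b * (a' * a' * a' * a') = b * b * a'" using pow4_F4[of a'] by simp
  show ?thesis
  apply (rule ext)+
  subgoal for i j
    apply (cases "i = 0"; cases "i = 1"; cases "i = 2"; cases "j = 0"; cases "j=1"; cases "j=2")
    apply (simp_all add: mmul_alt gmat_alt)
    using p4 by (simp_all add: sq_add_F4 algebra_simps)
  done
qed

lemma gmat_00: "gmat a b c 0 0 = a" and gmat_01: "gmat a b c 0 1 = b" and gmat_02: "gmat a b c 0 2 = c"
  by (simp_all add: gmat_def)
lemma gmat_inj: "gmat a b c = gmat a' b' c' \<Longrightarrow> a = a' \<and> b = b' \<and> c = c'"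
  by (metis gmat_00 gmat_01 gmat_02)






lemma Qcond_alt: "Qcond a b c \<longleftrightarrow> a \<noteq> 0 \<and> a*(c*c) + a*a*c = b*(b*b)"
  by (simp add: Qcond_def f4add_eq f4mul_eq F0_eq)

lemma Qcond_mul_eq:
  fixes a b c a' b' c' :: F4
  assumes h1: "a*(c*c) + a*a*c = b*(b*b)" and h2: "a'*(c'*c') + a'*a'*c' = b'*(b'*b')"
  shows "(a*a')*((a*c'+b*b'*b'+c*a')*(a*c'+b*b'*b'+c*a')) + (a*a')*(a*a')*(a*c'+b*b'*b'+c*a')
     = (a*b'+b*a'*a')*((a*b'+b*a'*a')*(a*b'+b*a'*a'))"
proof -
  have p1: "b'*b'*b'*b' = b'" and p2: "a'*a'*a'*a' = a'" by (rule pow4_F4)+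
  have C2: "(a*c'+b*b'*b'+c*a')*(a*c'+b*b'*b'+c*a') = a*a*(c'*c') + b*b*b' + c*c*(a'*a')"
    using p1 by (simp add: sq_add_F4 algebra_simps)
  have B3: "(a*b'+b*a'*a')*((a*b'+b*a'*a')*(a*b'+b*a'*a')) = a*a*a*(b'*b'*b') + a*a*(a'*a')*b*(b'*b') + a*a'*(b*b)*b' + b*b*b*(a'*a'*a')"
  proof -
    have "(a*b'+b*a'*a')*((a*b'+b*a'*a')*(a*b'+b*a'*a')) = (a*b'+b*a'*a')*(a*a*(b'*b') + b*b*(a'*a'*a'*a'))"
      by (simp add: sq_add_F4 algebra_simps)
    also have "\<dots> = (a*b'+b*a'*a')*(a*a*(b'*b') + b*b*a')" using p2 by simp
    also have "\<dots> = a*a*a*(b'*b'*b') + a*a*(a'*a')*b*(b'*b') + a*a'*(b*b)*b' + b*b*b*(a'*a'*a')"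
      using p2 by (simp add: algebra_simps)
    finally show ?thesis .
  qed
  show ?thesis unfolding C2 B3 using h1 h2 p2 by algebra
qed

lemma Qcond_mul: "Qcond a b c \<Longrightarrow> Qcond a' b' c' \<Longrightarrow>
   Qcond (a * a') (a * b' + b * a' * a') (a * c' + b * b' * b' + c * a')"
  unfolding Qcond_alt using Qcond_mul_eq by auto

lemma Qcond_tw: "Qcond a b c \<Longrightarrow> Qcond (tw' r a) (tw' r b) (tw' r c)"
  unfolding Qcond_alt by (metis tw'_0' tw'_add tw'_mult)

lemma Qgrp_gmat: "gmat a b c \<in> Qgrp \<longleftrightarrow> Qcond a b c"
  unfolding Qgrp_def using gmat_inj by blast

lemma Qgrp_iff: "x \<in> Qgrp \<longleftrightarrow> (\<exists>a b c. x = gmat a b c \<and> Qcond a b c)"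
  unfolding Qgrp_def by blast

lemma QZ_gmat: "(gmat a b c, n) \<in> QZ \<longleftrightarrow> Qcond a b c"
  unfolding QZ_def by (simp add: Qgrp_gmat)

lemma QZ_iff: "x \<in> QZ \<longleftrightarrow> (\<exists>a b c n. x = (gmat a b c, n) \<and> Qcond a b c)"
proof -
  have "x \<in> QZ \<longleftrightarrow> fst x \<in> Qgrp" unfolding QZ_def by (cases x) auto
  also have "\<dots> \<longleftrightarrow> (\<exists>a b c n. x = (gmat a b c, n) \<and> Qcond a b c)"
    unfolding Qgrp_iff by (cases x) auto
  finally show ?thesis .
qed

definition eQ :: elt where "eQ = (gmat 1 0 0, 0)"

context fixes f :: nat assumes oddf: "odd f"
begin

lemma gmul_gmat: "gmul f (gmat a b c, n) (gmat a' b' c', m) =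
   (gmat (a * tw' n a') (a * tw' n b' + b * tw' n a' * tw' n a') (a * tw' n c' + b * tw' n b' * tw' n b' + c * tw' n a'), n + m)"
  by (simp add: gmul_def twmat_gmat[OF oddf] gmat_mul)

lemma gmul_assoc: "gmul f x (gmul f y z) = gmul f (gmul f x y) z"
  by (simp add: gmul_def twmat_mmul[OF oddf] twmat_twmat[OF oddf] mmul_assoc add.assoc)

lemma QZ_closed: assumes "x \<in> QZ" "y \<in> QZ" shows "gmul f x y \<in> QZ"
proof -
  obtain a b c n where x: "x = (gmat a b c, n)" "Qcond a b c" using assms(1) QZ_iff by blast
  obtain a' b' c' m where y: "y = (gmat a' b' c', m)" "Qcond a' b' c'" using assms(2) QZ_iff by blast
  show ?thesis unfolding x y gmul_gmat QZ_gmat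
    using Qcond_mul[OF x(2) Qcond_tw[OF y(2), of n]] by simp
qed


lemma eQ_QZ: "eQ \<in> QZ" unfolding eQ_def QZ_gmat Qcond_alt by simp

lemma eQ_left: "x \<in> QZ \<Longrightarrow> gmul f eQ x = x"
  unfolding QZ_iff eQ_def by (auto simp: gmul_gmat)

lemma eQ_right: "x \<in> QZ \<Longrightarrow> gmul f x eQ = x"
  unfolding QZ_iff eQ_def by (auto simp: gmul_gmat)

end

definition ginv :: "elt \<Rightarrow> elt" where
  "ginv x = (let a = fst x 0 0; b = fst x 0 1; c = fst x 0 2; n = snd x in
     (gmat (tw' (-n) (a*a)) (tw' (-n) b) (tw' (-n) (a*a*(b*b*b) + c*a)), -n))"

lemma ginv_gmat: "ginv (gmat a b c, n) = (gmat (tw' (-n) (a*a)) (tw' (-n) b) (tw' (-n) (a*a*(b*b*b) + c*a)), -n)"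
  by (simp add: ginv_def gmat_def Let_def f4mul_eq)



lemma Qcond_inv: assumes "Qcond a b c" shows "Qcond (a*a) b (a*a*(b*b*b) + c*a)"
proof -
  have a0: "a \<noteq> 0" and h: "a*(c*c) + a*a*c = b*(b*b)" using assms by (auto simp: Qcond_alt)
  have a3: "a*a*a = 1" using pow3_F4[OF a0] .
  have b4: "b*b*b*b = b" by (rule pow4_F4)
  have sq: "(a*a*(b*b*b) + c*a)*(a*a*(b*b*b) + c*a) = a*a*(b*b*b)*(a*a*(b*b*b)) + c*a*(c*a)"
    by (rule sq_add_F4)
  show ?thesis using assms unfolding Qcond_alt
    by (cases a; cases b; cases c) (simp_all add: zero_F4_def one_F4_def plus_F4_def times_F4_def)
qed

context fixes f :: nat assumes oddf: "odd f"
begin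

lemma ginv_QZ: assumes "x \<in> QZ" shows "ginv x \<in> QZ"
proof -
  obtain a b c n where x: "x = (gmat a b c, n)" "Qcond a b c" using assms QZ_iff by blast
  show ?thesis unfolding x ginv_gmat QZ_gmat by (intro Qcond_tw Qcond_inv x(2))
qed

lemma ginv_right: assumes "x \<in> QZ" shows "gmul f x (ginv x) = eQ"
proof -
  obtain a b c n where x: "x = (gmat a b c, n)" "Qcond a b c" using assms QZ_iff by blast
  have a0: "a \<noteq> 0" using x(2) by (simp add: Qcond_alt)
  have a3: "a*a*a = 1" using pow3_F4[OF a0] .
  have a4: "a*a*a*a = a" by (rule pow4_F4)
  have e1: "a * (a * a) = 1" using a3 by (simp add: mult.assoc)
  have e2: "a * b + b * (a * a) * (a * a) = 0"
    by (cases a; cases b) (simp_all add: zero_F4_def one_F4_def plus_F4_def times_F4_def)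
  have e3: "a * (a * a * (b * b * b) + c * a) + b * b * b + c * (a * a) = 0"
    using a0 by (cases a; cases b; cases c) (simp_all add: zero_F4_def one_F4_def plus_F4_def times_F4_def)
  show ?thesis unfolding x ginv_gmat gmul_gmat[OF oddf] eQ_def
    by (simp add: tw'_tw' e1 e2 e3)
qed

lemma ginv_left: assumes "x \<in> QZ" shows "gmul f (ginv x) x = eQ"
proof -
  obtain a b c n where x: "x = (gmat a b c, n)" "Qcond a b c" using assms QZ_iff by blast
  have a0: "a \<noteq> 0" using x(2) by (simp add: Qcond_alt)
  have a3: "a*a*a = 1" using pow3_F4[OF a0] .
  have e1: "a * a * a = 1" using a3 .
  have e2: "a * a * b + b * a * a = 0" by (simp add: algebra_simps)
  have e3: "a * a * c + b * b * b + (a * a * (b * b * b) + c * a) * a = 0"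
    using a0 by (cases a; cases b; cases c) (simp_all add: zero_F4_def one_F4_def plus_F4_def times_F4_def)
  let ?t = "tw' (-n)"
  have "gmul f (ginv x) x = (gmat (?t (a*a*a)) (?t (a * a * b + b * a * a))
      (?t (a * a * c + b * b * b + (a * a * (b * b * b) + c * a) * a)), 0)"
    unfolding x ginv_gmat gmul_gmat[OF oddf] by (simp add: tw'_mult tw'_add)
  then show ?thesis unfolding e1 e2 e3 eQ_def by simp
qed

end

lemmas raw = zero_F4_def one_F4_def plus_F4_def times_F4_def inverse_F4_def divide_F4_def

lemma gmat_eq_iff[simp]: "gmat a b c = gmat a' b' c' \<longleftrightarrow> a = a' \<and> b = b' \<and> c = c'"
  using gmat_inj by blast

lemma C6_iff: "x \<in> C6 \<longleftrightarrow> (\<exists>a c. x = gmat a 0 c \<and> a \<noteq> 0 \<and> (c = 0 \<or> c = a))"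
proof -
  have m: "mmul (gmat 1 0 c0) (gmat a 0 0) = gmat a 0 (c0 * a)" for c0 a :: F4
    by (simp add: gmat_mul)
  show ?thesis
  proof
    assume "x \<in> C6"
    then obtain u v where "x = mmul u v" "u \<in> Zc" "v \<in> C3" unfolding C6_def by blast
    then show "\<exists>a c. x = gmat a 0 c \<and> a \<noteq> 0 \<and> (c = 0 \<or> c = a)"
      unfolding Zc_def C3_def F0_eq F1_eq using m by auto
  next
    assume "\<exists>a c. x = gmat a 0 c \<and> a \<noteq> 0 \<and> (c = 0 \<or> c = a)"
    then obtain a c where x: "x = gmat a 0 c" "a \<noteq> 0" "c = 0 \<or> c = a" by blast
    define c0 where "c0 = (if c = 0 then 0 else (1::F4))"
    have "x = mmul (gmat 1 0 c0) (gmat a 0 0)" using x m c0_def by auto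
    moreover have "gmat 1 0 c0 \<in> Zc" unfolding Zc_def c0_def F0_eq F1_eq by auto
    moreover have "gmat a 0 0 \<in> C3" unfolding C3_def F0_eq using x by auto
    ultimately show "x \<in> C6" unfolding C6_def by blast
  qed
qed

lemma C6Z_iff: "x \<in> C6Z \<longleftrightarrow> (\<exists>a c n. x = (gmat a 0 c, n) \<and> a \<noteq> 0 \<and> (c = 0 \<or> c = a))"
  unfolding C6Z_def by (cases x) (auto simp: C6_iff)

lemma C6Z_gmat: "(gmat a b c, n) \<in> C6Z \<longleftrightarrow> a \<noteq> 0 \<and> b = 0 \<and> (c = 0 \<or> c = a)"
  unfolding C6Z_iff gmat_eq_iff by auto

lemma C6Z_QZ: "x \<in> C6Z \<Longrightarrow> x \<in> QZ"
  unfolding C6Z_iff by (auto simp: QZ_gmat Qcond_alt mult.assoc)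

context fixes f :: nat assumes oddf: "odd f"
begin

lemma C6Z_mul: "x \<in> C6Z \<Longrightarrow> y \<in> C6Z \<Longrightarrow> gmul f x y \<in> C6Z"
  unfolding C6Z_iff by (auto simp: gmul_gmat[OF oddf] tw'_0' gmat_eq_iff)

lemma C6Z_inv: "x \<in> C6Z \<Longrightarrow> ginv x \<in> C6Z"
  unfolding C6Z_iff by (auto simp: ginv_gmat tw'_0' gmat_eq_iff)

lemma C6Z_cancel: assumes "h \<in> C6Z" "x \<in> QZ" "gmul f h x \<in> C6Z" shows "x \<in> C6Z"
proof -
  have "x = gmul f (ginv h) (gmul f h x)"
    using assms by (simp add: gmul_assoc[OF oddf] ginv_left[OF oddf] eQ_left[OF oddf] C6Z_QZ)
  then show ?thesis using assms C6Z_mul C6Z_inv by metis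
qed

end

definition isF2 :: "F4 \<Rightarrow> bool" where "isF2 x \<longleftrightarrow> x = 0 \<or> x = 1"

lemma C4_iff: assumes "z \<noteq> F0" "z \<noteq> F1"
  shows "x \<in> C4 z \<longleftrightarrow> (\<exists>b c. x = gmat 1 b c \<and> Qcond 1 b c \<and> isF2 b)"
proof -
  have z: "z = Zt \<or> z = Zt2" using assms by (cases z) auto
  let ?S = "{gmat 1 0 0, gmat 1 0 1, gmat 1 1 Zt, gmat 1 1 Zt2}"
  let ?g = "\<lambda>A. mmul (gmat F1 F1 z) A"
  have S: "(\<exists>b c. x = gmat 1 b c \<and> Qcond 1 b c \<and> isF2 b) \<longleftrightarrow> x \<in> ?S"
  proof -
    have "Qcond 1 b c \<and> isF2 b \<longleftrightarrow> (b, c) \<in> {(0,0),(0,1),(1,Zt),(1,Zt2)}" for b c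
      unfolding Qcond_alt isF2_def
      by (cases b; cases c) (simp_all add: raw)
    then show ?thesis by auto
  qed
  have step: "A \<in> ?S \<Longrightarrow> ?g A \<in> ?S" for A
    using z by (auto simp: F1_eq gmat_mul)
  have it: "(?g ^^ n) (gmat F1 F0 F0) \<in> ?S" for n
  proof (induction n)
    case 0 show ?case by (simp add: F0_eq F1_eq)
  next
    case (Suc n) then show ?case using step[of "(?g ^^ n) (gmat F1 F0 F0)"] by simp
  qed
  have all: "y \<in> ?S \<Longrightarrow> \<exists>n. y = (?g ^^ n) (gmat F1 F0 F0)" for y
  proof -
    have i1: "(?g ^^ 1) (gmat F1 F0 F0) = gmat 1 1 z" by (simp add: F0_eq F1_eq gmat_mul)
    have i2: "(?g ^^ 2) (gmat F1 F0 F0) = gmat 1 0 1" by (simp add: F0_eq F1_eq gmat_mul numeral_2_eq_2)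
    have i3: "(?g ^^ 3) (gmat F1 F0 F0) = gmat 1 1 (z + 1)"
      by (simp add: F0_eq F1_eq gmat_mul numeral_3_eq_3 algebra_simps)
    have i0: "(?g ^^ 0) (gmat F1 F0 F0) = gmat 1 0 0" by (simp add: F0_eq F1_eq)
    assume "y \<in> ?S"
    then show ?thesis using z i0 i1 i2 i3 by (metis add_tab empty_iff insert_iff)
  qed
  show ?thesis unfolding S C4_def using it all by blast
qed


lemma isF2_add: "isF2 (x + y) \<longleftrightarrow> (isF2 x \<longleftrightarrow> isF2 y)"
  unfolding isF2_def by (cases x; cases y) (simp_all add: raw)

lemma isF2_tw: "isF2 (tw' n x) \<longleftrightarrow> isF2 x"
  unfolding isF2_def tw'_def frb_def by (cases x) (simp_all add: raw)

lemma Q8_iff: "g \<in> Q8 \<longleftrightarrow> (\<exists>b c. g = gmat 1 b c \<and> Qcond 1 b c)"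
  unfolding Q8_def Qgrp_iff F1_eq by (auto simp: gmat_00)

lemma Csub_iff: assumes "z \<noteq> F0" "z \<noteq> F1"
  shows "x \<in> Csub z \<longleftrightarrow> (\<exists>b c n. x = (gmat 1 b c, n) \<and> Qcond 1 b c \<and> (even n \<longleftrightarrow> isF2 b))"
  unfolding Csub_def Q8_iff C4_iff[OF assms] by auto

lemma Csub_gmat: assumes "z \<noteq> F0" "z \<noteq> F1"
  shows "(gmat a b c, n) \<in> Csub z \<longleftrightarrow> a = 1 \<and> Qcond 1 b c \<and> (even n \<longleftrightarrow> isF2 b)"
  unfolding Csub_iff[OF assms] by auto

lemma Csub_QZ: assumes "z \<noteq> F0" "z \<noteq> F1" shows "x \<in> Csub z \<Longrightarrow> x \<in> QZ"
  unfolding Csub_iff[OF assms] by (auto simp: QZ_gmat)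

context fixes f :: nat assumes oddf: "odd f"
begin

lemma Csub_mul: assumes "z \<noteq> F0" "z \<noteq> F1" "x \<in> Csub z" "y \<in> Csub z" shows "gmul f x y \<in> Csub z"
proof -
  obtain b c n where x: "x = (gmat 1 b c, n)" "Qcond 1 b c" "even n \<longleftrightarrow> isF2 b"
    using assms(3) Csub_iff[OF assms(1,2)] by blast
  obtain b' c' m where y: "y = (gmat 1 b' c', m)" "Qcond 1 b' c'" "even m \<longleftrightarrow> isF2 b'"
    using assms(4) Csub_iff[OF assms(1,2)] by blast
  have q: "gmul f x y \<in> QZ" using QZ_closed[OF oddf] x y by (simp add: QZ_gmat)
  show ?thesis using q x y 
    by (simp add: gmul_gmat[OF oddf] Csub_gmat[OF assms(1,2)] QZ_gmat isF2_add isF2_tw) blast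
qed

lemma Csub_inv: assumes "z \<noteq> F0" "z \<noteq> F1" "x \<in> Csub z" shows "ginv x \<in> Csub z"
proof -
  obtain b c n where x: "x = (gmat 1 b c, n)" "Qcond 1 b c" "even n \<longleftrightarrow> isF2 b"
    using assms(3) Csub_iff[OF assms(1,2)] by blast
  have q: "ginv x \<in> QZ" using ginv_QZ[OF oddf] x by (simp add: QZ_gmat)
  show ?thesis using q x 
    by (simp add: ginv_gmat Csub_gmat[OF assms(1,2)] QZ_gmat isF2_tw)
qed

lemma Csub_cancel: assumes "z \<noteq> F0" "z \<noteq> F1" "h \<in> Csub z" "x \<in> QZ" "gmul f h x \<in> Csub z" shows "x \<in> Csub z"
proof -
  have "x = gmul f (ginv h) (gmul f h x)"
    using assms by (simp add: gmul_assoc[OF oddf] ginv_left[OF oddf] eQ_left[OF oddf] Csub_QZ)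
  then show ?thesis using assms Csub_mul Csub_inv by metis
qed

end

lemma char_one: assumes "is_char H mul \<chi>" "e \<in> H" "mul e e = e" shows "\<chi> e = 1"
proof -
  have "\<chi> e = \<chi> e * \<chi> e" using assms unfolding is_char_def by metis
  moreover have "\<chi> e \<noteq> 0" using assms unfolding is_char_def by blast
  ultimately show ?thesis by (metis mult_cancel_left1)
qed

lemma char_mul: "is_char H mul \<chi> \<Longrightarrow> x \<in> H \<Longrightarrow> y \<in> H \<Longrightarrow> \<chi> (mul x y) = \<chi> x * \<chi> y"
  unfolding is_char_def by blast

lemma char_nz: "is_char H mul \<chi> \<Longrightarrow> x \<in> H \<Longrightarrow> \<chi> x \<noteq> 0"
  unfolding is_char_def by blast

section \<open>Coset representatives\<close>

definition R :: "F4 \<Rightarrow> elt" where "R \<beta> = (gmat 1 \<beta> (if \<beta> = 0 then 0 else Zt), 0)"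

lemma R_QZ: "R \<beta> \<in> QZ"
  unfolding R_def QZ_gmat Qcond_alt by (cases \<beta>) (simp_all add: raw)

lemma decomp_aux: "Qcond a b c \<Longrightarrow> c + a * tw' n (if b = 0 then 0 else Zt) = 0 \<or> c + a * tw' n (if b = 0 then 0 else Zt) = a"
  unfolding Qcond_alt tw'_def frb_def
  by (cases "odd n"; cases a; cases b; cases c) (simp_all add: raw)

lemma decomp: assumes oddf: "odd f" and "x \<in> QZ" shows "\<exists>h \<beta>. h \<in> C6Z \<and> x = gmul f h (R \<beta>)"
proof -
  obtain a b c n where x: "x = (gmat a b c, n)" "Qcond a b c" using assms QZ_iff by blast
  have a0: "a \<noteq> 0" using x by (simp add: Qcond_alt)
  define \<beta> where "\<beta> = tw' n (b * inverse a)"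
  have b0: "\<beta> = 0 \<longleftrightarrow> b = 0" unfolding \<beta>_def tw'_0' using a0 by simp
  define c' where "c' = c + a * tw' n (if b = 0 then 0 else Zt)"
  have h: "(gmat a 0 c', n) \<in> C6Z" unfolding C6Z_gmat c'_def using a0 decomp_aux[OF x(2)] by auto
  have tt: "tw' n \<beta> = b * inverse a" unfolding \<beta>_def tw'_tw' by (simp add: tw'_def)
  have "gmul f (gmat a 0 c', n) (R \<beta>) = (gmat a b c, n)"
    unfolding R_def gmul_gmat[OF oddf] using a0 b0 tt
    by (simp add: c'_def)
  then show ?thesis using h x by metis
qed

lemma mul_I: assumes oddf: "odd f" shows
  "gmul f (R 0) (gmat 1 1 Zt, 0) = gmul f (gmat 1 0 0, 0) (R 1)"
  "gmul f (R 1) (gmat 1 1 Zt, 0) = gmul f (gmat 1 0 1, 0) (R 0)"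
  "gmul f (R Zt) (gmat 1 1 Zt, 0) = gmul f (gmat 1 0 0, 0) (R Zt2)"
  "gmul f (R Zt2) (gmat 1 1 Zt, 0) = gmul f (gmat 1 0 1, 0) (R Zt)"
  unfolding R_def by (simp_all add: gmul_gmat[OF oddf] tw'_def frb_def)

lemma mul_J: assumes oddf: "odd f" shows
  "gmul f (R 0) (gmat 1 Zt Zt, 0) = gmul f (gmat 1 0 0, 0) (R Zt)"
  "gmul f (R 1) (gmat 1 Zt Zt, 0) = gmul f (gmat 1 0 1, 0) (R Zt2)"
  "gmul f (R Zt) (gmat 1 Zt Zt, 0) = gmul f (gmat 1 0 1, 0) (R 0)"
  "gmul f (R Zt2) (gmat 1 Zt Zt, 0) = gmul f (gmat 1 0 0, 0) (R 1)"
  unfolding R_def by (simp_all add: gmul_gmat[OF oddf] tw'_def frb_def)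

lemma mul_K: assumes oddf: "odd f" shows
  "gmul f (R 0) (gmat 1 Zt2 Zt, 0) = gmul f (gmat 1 0 0, 0) (R Zt2)"
  "gmul f (R 1) (gmat 1 Zt2 Zt, 0) = gmul f (gmat 1 0 0, 0) (R Zt)"
  "gmul f (R Zt) (gmat 1 Zt2 Zt, 0) = gmul f (gmat 1 0 1, 0) (R 1)"
  "gmul f (R Zt2) (gmat 1 Zt2 Zt, 0) = gmul f (gmat 1 0 1, 0) (R 0)"
  unfolding R_def by (simp_all add: gmul_gmat[OF oddf] tw'_def frb_def)

lemma mul_T: assumes oddf: "odd f" shows
  "gmul f (R 0) (gmat Zt 0 0, 0) = gmul f (gmat Zt 0 0, 0) (R 0)"
  "gmul f (R 1) (gmat Zt 0 0, 0) = gmul f (gmat Zt 0 0, 0) (R Zt)"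
  "gmul f (R Zt) (gmat Zt 0 0, 0) = gmul f (gmat Zt 0 0, 0) (R Zt2)"
  "gmul f (R Zt2) (gmat Zt 0 0, 0) = gmul f (gmat Zt 0 0, 0) (R 1)"
  unfolding R_def by (simp_all add: gmul_gmat[OF oddf] tw'_def frb_def)

lemma mul_P: assumes oddf: "odd f" shows
  "gmul f (R 0) (gmat 1 0 0, 1) = gmul f (gmat 1 0 0, 1) (R 0)"
  "gmul f (R 1) (gmat 1 0 0, 1) = gmul f (gmat 1 0 1, 1) (R 1)"
  "gmul f (R Zt) (gmat 1 0 0, 1) = gmul f (gmat 1 0 1, 1) (R Zt2)"
  "gmul f (R Zt2) (gmat 1 0 0, 1) = gmul f (gmat 1 0 1, 1) (R Zt)"
  unfolding R_def by (simp_all add: gmul_gmat[OF oddf] tw'_def frb_def)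



lemma Ind_val: "F \<in> Ind G mul H \<chi> \<Longrightarrow> h \<in> H \<Longrightarrow> x \<in> G \<Longrightarrow> F (mul h x) = \<chi> h * F x"
  unfolding Ind_def by blast

lemma Ind_out: "F \<in> Ind G mul H \<chi> \<Longrightarrow> x \<notin> G \<Longrightarrow> F x = 0"
  unfolding Ind_def by blast

lemma ract_in: "x \<in> G \<Longrightarrow> ract G mul g F x = F (mul x g)"
  unfolding ract_def by simp

context
  fixes f :: nat and \<phi>2 :: "elt \<Rightarrow> 'k::field_char_0" and t :: 'k
  assumes oddf: "odd f"
    and ch: "is_char C6Z (gmul f) \<phi>2"
    and v1: "\<phi>2 (gmat 1 0 0, 0) = 1" and v2: "\<phi>2 (gmat 1 0 1, 0) = -1"
    and v3: "\<phi>2 (gmat Zt 0 0, 0) = 1" and v4: "\<phi>2 (gmat 1 0 0, 1) = t"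
    and v5: "\<phi>2 (gmat 1 0 1, 1) = - t" and tnz: "t \<noteq> 0"
begin

abbreviation "V \<equiv> Ind QZ (gmul f) C6Z \<phi>2"

lemma V_val: "G \<in> V \<Longrightarrow> h \<in> C6Z \<Longrightarrow> G (gmul f h (R b)) = \<phi>2 h * G (R b)"
  using Ind_val R_QZ by metis

lemma V_ext: assumes "F \<in> V" "G \<in> V" "\<And>b. F (R b) = G (R b)" shows "F = G"
proof
  fix x show "F x = G x"
  proof (cases "x \<in> QZ")
    case True
    then obtain h b where "h \<in> C6Z" "x = gmul f h (R b)" using decomp[OF oddf] by blast
    then show ?thesis using assms V_val by metis
  next
    case False then show ?thesis using assms Ind_out by metis
  qed
qed

lemma hC6: "(gmat 1 0 0, n) \<in> C6Z" "(gmat 1 0 1, n) \<in> C6Z" "(gmat Zt 0 0, n) \<in> C6Z"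
  by (simp_all add: C6Z_gmat)

lemma yQZ: "(gmat 1 1 Zt, 0) \<in> QZ" "(gmat 1 Zt Zt, 0) \<in> QZ" "(gmat 1 Zt2 Zt, 0) \<in> QZ"
  "(gmat Zt 0 0, 0) \<in> QZ" "(gmat 1 0 0, 1) \<in> QZ"
  by (simp_all add: QZ_gmat Qcond_alt)

lemma coords:
  assumes G: "G \<in> V"
  shows
  "ract QZ (gmul f) (gmat 1 1 Zt, 0) G (R 0) = G (R 1)"
  "ract QZ (gmul f) (gmat 1 1 Zt, 0) G (R 1) = - G (R 0)"
  "ract QZ (gmul f) (gmat 1 1 Zt, 0) G (R Zt) = G (R Zt2)"
  "ract QZ (gmul f) (gmat 1 1 Zt, 0) G (R Zt2) = - G (R Zt)"
  "ract QZ (gmul f) (gmat 1 Zt Zt, 0) G (R 0) = G (R Zt)"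
  "ract QZ (gmul f) (gmat 1 Zt Zt, 0) G (R 1) = - G (R Zt2)"
  "ract QZ (gmul f) (gmat 1 Zt Zt, 0) G (R Zt) = - G (R 0)"
  "ract QZ (gmul f) (gmat 1 Zt Zt, 0) G (R Zt2) = G (R 1)"
  "ract QZ (gmul f) (gmat 1 Zt2 Zt, 0) G (R 0) = G (R Zt2)"
  "ract QZ (gmul f) (gmat 1 Zt2 Zt, 0) G (R 1) = G (R Zt)"
  "ract QZ (gmul f) (gmat 1 Zt2 Zt, 0) G (R Zt) = - G (R 1)"
  "ract QZ (gmul f) (gmat 1 Zt2 Zt, 0) G (R Zt2) = - G (R 0)"
  "ract QZ (gmul f) (gmat Zt 0 0, 0) G (R 0) = G (R 0)"
  "ract QZ (gmul f) (gmat Zt 0 0, 0) G (R 1) = G (R Zt)"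
  "ract QZ (gmul f) (gmat Zt 0 0, 0) G (R Zt) = G (R Zt2)"
  "ract QZ (gmul f) (gmat Zt 0 0, 0) G (R Zt2) = G (R 1)"
  "ract QZ (gmul f) (gmat 1 0 0, 1) G (R 0) = t * G (R 0)"
  "ract QZ (gmul f) (gmat 1 0 0, 1) G (R 1) = - t * G (R 1)"
  "ract QZ (gmul f) (gmat 1 0 0, 1) G (R Zt) = - t * G (R Zt2)"
  "ract QZ (gmul f) (gmat 1 0 0, 1) G (R Zt2) = - t * G (R Zt)"
  by (simp_all add: ract_in R_QZ mul_I[OF oddf] mul_J[OF oddf] mul_K[OF oddf] mul_T[OF oddf] mul_P[OF oddf]
     V_val[OF G] hC6 v1 v2 v3 v4 v5)


lemma eQ_C6Z: "eQ \<in> C6Z" unfolding eQ_def by (simp add: C6Z_gmat)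

lemma V_nonzero: "V \<noteq> {\<lambda>_. 0}"
proof -
  define B where "B = (\<lambda>x. if x \<in> C6Z then \<phi>2 x else 0)"
  have "B \<in> V"
    unfolding Ind_def
  proof (intro CollectI conjI allI impI ballI)
    fix x assume x: "x \<notin> QZ"
    have "x \<notin> C6Z"
    proof
      assume "x \<in> C6Z" then have "x \<in> QZ" by (rule C6Z_QZ)
      with x show False by simp
    qed
    then show "B x = 0" unfolding B_def by simp
  next
    fix h x assume h: "h \<in> C6Z" and x: "x \<in> QZ"
    show "B (gmul f h x) = \<phi>2 h * B x"
    proof (cases "x \<in> C6Z")
      case True
      have hx: "gmul f h x \<in> C6Z" by (rule C6Z_mul[OF oddf h True])
      have "\<phi>2 (gmul f h x) = \<phi>2 h * \<phi>2 x" by (rule char_mul[OF ch h True])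
      then show ?thesis unfolding B_def using hx True by simp
    next
      case False
      have "gmul f h x \<notin> C6Z"
      proof
        assume "gmul f h x \<in> C6Z"
        then have "x \<in> C6Z" by (rule C6Z_cancel[OF oddf h x])
        with False show False by simp
      qed
      then show ?thesis unfolding B_def using False by simp
    qed
  qed
  moreover have "B eQ = 1" unfolding B_def using eQ_C6Z by (simp add: eQ_def v1)
  ultimately show ?thesis
  proof (intro notI)
    assume "B \<in> V" "B eQ = 1" "V = {\<lambda>_. 0}"
    then have "B = (\<lambda>_. 0)" by simp
    then have "B eQ = 0" by simp
    with \<open>B eQ = 1\<close> show False by simp
  qed
qed

lemma irred: "irreducible_rep QZ (gmul f) V"
  unfolding irreducible_rep_def
proof (intro conjI V_nonzero allI impI)
  fix W :: "(elt \<Rightarrow> 'k) set"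
  assume A: "is_subspace W \<and> W \<subseteq> V \<and> (\<forall>g\<in>QZ. \<forall>F\<in>W. ract QZ (gmul f) g F \<in> W)"
  have sub: "is_subspace W" using A by simp
  have WV: "W \<subseteq> V" using A by blast
  have inv: "\<And>g F. g \<in> QZ \<Longrightarrow> F \<in> W \<Longrightarrow> ract QZ (gmul f) g F \<in> W" using A by blast
  have W0: "(\<lambda>_. 0) \<in> W" using sub unfolding is_subspace_def by simp
  have Wadd: "\<And>F G. F \<in> W \<Longrightarrow> G \<in> W \<Longrightarrow> (\<lambda>x. F x + G x) \<in> W"
    using sub unfolding is_subspace_def by blast
  have Wsm: "\<And>c F. F \<in> W \<Longrightarrow> (\<lambda>x. c * F x) \<in> W"
    using sub unfolding is_subspace_def by blast
  show "W = {\<lambda>_. 0} \<or> W = V"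
  proof (cases "\<exists>F\<in>W. F \<noteq> (\<lambda>_. 0)")
    case False then have "W = {\<lambda>_. 0}" using W0 by blast
    then show ?thesis by (rule disjI1)
  next
    case True
    then obtain F where F: "F \<in> W" "F \<noteq> (\<lambda>_. 0)" by blast
    have FV: "F \<in> V" using F WV by auto
    have zV: "(\<lambda>_. 0) \<in> V" unfolding Ind_def by simp
    have "\<exists>b. F (R b) \<noteq> 0"
    proof (rule ccontr)
      assume "\<not> (\<exists>b. F (R b) \<noteq> 0)"
      then have "F = (\<lambda>_. 0)" by (intro V_ext[OF FV zV]) simp
      with F(2) show False by simp
    qed
    then obtain b where b: "F (R b) \<noteq> 0" by blast
    let ?rI = "(gmat 1 1 Zt, 0::int)" and ?rJ = "(gmat 1 Zt Zt, 0::int)" and ?rK = "(gmat 1 Zt2 Zt, 0::int)"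
      and ?rT = "(gmat Zt 0 0, 0::int)" and ?rP = "(gmat 1 0 0, 1::int)"
    have "\<exists>G\<in>W. G (R 0) \<noteq> 0"
    proof -
      have "b = 0 \<or> b = 1 \<or> b = Zt \<or> b = Zt2" by (rule F4_cases)
      moreover have "ract QZ (gmul f) ?rI F \<in> W" "ract QZ (gmul f) ?rJ F \<in> W" "ract QZ (gmul f) ?rK F \<in> W"
        using inv[OF yQZ(1) F(1)] inv[OF yQZ(2) F(1)] inv[OF yQZ(3) F(1)] by auto
      ultimately show ?thesis
      proof (elim disjE)
        assume "b = 0" then have "F (R 0) \<noteq> 0" using b by simp
        then show ?thesis using F(1) by (rule bexI)
      next
        assume "b = 1" then have "ract QZ (gmul f) ?rI F (R 0) \<noteq> 0" using b coords(1)[OF FV] by simp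
        then show ?thesis using \<open>ract QZ (gmul f) ?rI F \<in> W\<close> by (rule bexI)
      next
        assume "b = Zt" then have "ract QZ (gmul f) ?rJ F (R 0) \<noteq> 0" using b coords(5)[OF FV] by simp
        then show ?thesis using \<open>ract QZ (gmul f) ?rJ F \<in> W\<close> by (rule bexI)
      next
        assume "b = Zt2" then have "ract QZ (gmul f) ?rK F (R 0) \<noteq> 0" using b coords(9)[OF FV] by simp
        then show ?thesis using \<open>ract QZ (gmul f) ?rK F \<in> W\<close> by (rule bexI)
      qed
    qed
    then obtain G where G: "G \<in> W" "G (R 0) \<noteq> 0" by blast
    define G1 where "G1 = ract QZ (gmul f) ?rT G"
    define G2 where "G2 = ract QZ (gmul f) ?rT G1"
    define P where "P = (\<lambda>x. G x + G1 x + G2 x)"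
    define Q where "Q = (\<lambda>x. P x + (1 / t) * ract QZ (gmul f) ?rP P x)"
    have G1W: "G1 \<in> W" unfolding G1_def using inv[OF yQZ(4) G(1)] .
    have G2W: "G2 \<in> W" unfolding G2_def using inv[OF yQZ(4) G1W] .
    have PW: "P \<in> W" unfolding P_def using Wadd[OF Wadd[OF G(1) G1W] G2W] by simp
    have QW: "Q \<in> W" unfolding Q_def using Wadd[OF PW Wsm[of _ "1/t", OF inv[OF yQZ(5) PW]]] by simp
    have GV: "G \<in> V" "G1 \<in> V" "G2 \<in> V" "P \<in> V" using G G1W G2W PW WV by auto
    have g1: "G1 (R 0) = G (R 0)" "G1 (R 1) = G (R Zt)" "G1 (R Zt) = G (R Zt2)" "G1 (R Zt2) = G (R 1)"
      unfolding G1_def using coords(13-16)[OF GV(1)] by simp_all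
    have g2: "G2 (R 0) = G (R 0)" "G2 (R 1) = G (R Zt2)" "G2 (R Zt) = G (R 1)" "G2 (R Zt2) = G (R Zt)"
      unfolding G2_def using coords(13-16)[OF GV(2)] g1 by simp_all
    have p: "P (R 0) = 3 * G (R 0)" "P (R 1) = G (R 1) + G (R Zt) + G (R Zt2)"
      "P (R Zt) = G (R 1) + G (R Zt) + G (R Zt2)" "P (R Zt2) = G (R 1) + G (R Zt) + G (R Zt2)"
      unfolding P_def using g1 g2 by (simp_all add: algebra_simps)
    have Q0: "Q (R 0) = 6 * G (R 0)" "Q (R 1) = 0" "Q (R Zt) = 0" "Q (R Zt2) = 0"
      unfolding Q_def using coords(17-20)[OF GV(4)] p tnz by simp_all
    define E where "E = (\<lambda>x. (1 / (6 * G (R 0))) * Q x)"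
    have EW: "E \<in> W" unfolding E_def using Wsm[OF QW] .
    have EV: "E \<in> V" using EW WV by auto
    have E0: "E (R 0) = 1" "E (R 1) = 0" "E (R Zt) = 0" "E (R Zt2) = 0"
      unfolding E_def using Q0 G(2) by simp_all
    have "V \<subseteq> W"
    proof
      fix H assume HV: "H \<in> V"
      define C where "C = (\<lambda>x. H (R 0) * E x + (- H (R 1)) * ract QZ (gmul f) ?rI E x
        + (- H (R Zt)) * ract QZ (gmul f) ?rJ E x + (- H (R Zt2)) * ract QZ (gmul f) ?rK E x)"
      have CW: "C \<in> W" unfolding C_def
        using Wadd[OF Wadd[OF Wadd[OF Wsm[of _ "H (R 0)", OF EW] Wsm[of _ "- H (R 1)", OF inv[OF yQZ(1) EW]]] Wsm[of _ "- H (R Zt)", OF inv[OF yQZ(2) EW]]] Wsm[of _ "- H (R Zt2)", OF inv[OF yQZ(3) EW]]]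
        by simp
      have CV: "C \<in> V" using CW WV by auto
      have e: "ract QZ (gmul f) ?rI E (R 0) = 0" "ract QZ (gmul f) ?rI E (R 1) = -1"
        "ract QZ (gmul f) ?rI E (R Zt) = 0" "ract QZ (gmul f) ?rI E (R Zt2) = 0"
        "ract QZ (gmul f) ?rJ E (R 0) = 0" "ract QZ (gmul f) ?rJ E (R 1) = 0"
        "ract QZ (gmul f) ?rJ E (R Zt) = -1" "ract QZ (gmul f) ?rJ E (R Zt2) = 0"
        "ract QZ (gmul f) ?rK E (R 0) = 0" "ract QZ (gmul f) ?rK E (R 1) = 0"
        "ract QZ (gmul f) ?rK E (R Zt) = 0" "ract QZ (gmul f) ?rK E (R Zt2) = -1"
        using coords(1-12)[OF EV] E0 by simp_all
      have "C (R b') = H (R b')" for b'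
        using F4_cases[of b'] by (elim disjE) (simp_all add: C_def e E0)
      then have "C = H" by (rule V_ext[OF CV HV])
      then show "H \<in> W" using CW by simp
    qed
    then show ?thesis using WV by auto
  qed
qed


end

definition S6 :: "elt set" where "S6 = {x \<in> C6Z. snd x = 0 \<or> snd x = 1}"

lemma S6_finite: "finite S6"
proof -
  have "S6 \<subseteq> (\<lambda>(a, c, m). (gmat a 0 c, m)) ` (UNIV \<times> UNIV \<times> {0::int, 1})"
  proof
    fix x assume "x \<in> S6"
    then obtain a c n where x: "x = (gmat a 0 c, n)" "n = 0 \<or> n = 1"
      unfolding S6_def C6Z_iff by auto
    then show "x \<in> (\<lambda>(a, c, m). (gmat a 0 c, m)) ` (UNIV \<times> UNIV \<times> {0::int, 1})"
      by (intro image_eqI[where x = "(a, c, n)"]) auto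
  qed
  moreover have "finite ((\<lambda>(a, c, m). (gmat a 0 c, m)) ` (UNIV \<times> UNIV \<times> {0::int, 1}))"
    by simp
  ultimately show ?thesis by (rule finite_subset)
qed

lemma e2_mul: assumes oddf: "odd f" and "x \<in> QZ"
  shows "gmul f (gmat 1 0 0, 2 * j) x = (fst x, 2 * j + snd x)"
proof -
  obtain a b c n where x: "x = (gmat a b c, n)" "Qcond a b c" using assms QZ_iff by blast
  show ?thesis unfolding x gmul_gmat[OF oddf] by simp
qed

lemma e2_Csub: "z \<noteq> F0 \<Longrightarrow> z \<noteq> F1 \<Longrightarrow> (gmat 1 0 0, 2 * j) \<in> Csub z"
  by (simp add: Csub_gmat Qcond_alt isF2_def)

lemma e2_C6Z: "(gmat 1 0 0, n) \<in> C6Z"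
  by (simp add: C6Z_gmat)

lemma char_pow:
  fixes \<psi> \<psi>' :: "elt \<Rightarrow> 'k::field"
  assumes oddf: "odd f" and ch: "is_char H (gmul f) \<psi>" and ch': "is_char H' (gmul f) \<psi>'"
    and H: "\<And>j. (gmat 1 0 0, 2 * j) \<in> H" and H': "\<And>j. (gmat 1 0 0, 2 * j) \<in> H'"
    and eq: "\<psi> (gmat 1 0 0, 2) = \<psi>' (gmat 1 0 0, 2)"
  shows "\<psi> (gmat 1 0 0, 2 * j) = \<psi>' (gmat 1 0 0, 2 * j)"
proof -
  have mul: "gmul f (gmat 1 0 0, 2 * i) (gmat 1 0 0, 2) = (gmat 1 0 0, 2 * (i + 1))" for i
    by (simp add: gmul_gmat[OF oddf] algebra_simps)
  have mul2: "gmul f (gmat 1 0 0, 2 * (i - 1)) (gmat 1 0 0, 2) = (gmat 1 0 0, 2 * i)" for i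
    by (simp add: gmul_gmat[OF oddf] algebra_simps)
  have two: "(gmat 1 0 0, 2::int) \<in> H" "(gmat 1 0 0, 2::int) \<in> H'" using H[of 1] H'[of 1] by simp_all
  have s1: "\<psi> (gmat 1 0 0, 2 * (i + 1)) = \<psi> (gmat 1 0 0, 2 * i) * \<psi> (gmat 1 0 0, 2)" for i
    using char_mul[OF ch H[of i] two(1)] mul by simp
  have s1': "\<psi>' (gmat 1 0 0, 2 * (i + 1)) = \<psi>' (gmat 1 0 0, 2 * i) * \<psi>' (gmat 1 0 0, 2)" for i
    using char_mul[OF ch' H'[of i] two(2)] mul by simp
  have s2: "\<psi> (gmat 1 0 0, 2 * i) = \<psi> (gmat 1 0 0, 2 * (i - 1)) * \<psi> (gmat 1 0 0, 2)" for i
    using char_mul[OF ch H[of "i - 1"] two(1)] mul2 by simp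
  have s2': "\<psi>' (gmat 1 0 0, 2 * i) = \<psi>' (gmat 1 0 0, 2 * (i - 1)) * \<psi>' (gmat 1 0 0, 2)" for i
    using char_mul[OF ch' H'[of "i - 1"] two(2)] mul2 by simp
  have nz: "\<psi> (gmat 1 0 0, 2) \<noteq> 0" using char_nz[OF ch two(1)] .
  have e0: "(gmat 1 0 0, 0::int) = gmul f (gmat 1 0 0, 0) (gmat 1 0 0, 0)"
    by (simp add: gmul_gmat[OF oddf])
  have b0: "\<psi> (gmat 1 0 0, 2 * 0) = \<psi>' (gmat 1 0 0, 2 * 0)"
    using char_one[OF ch _ e0[symmetric]] char_one[OF ch' _ e0[symmetric]] H[of 0] H'[of 0] by simp
  show ?thesis
  proof (induction j rule: int_induct[where k = 0])
    case base show ?case using b0 .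
  next
    case (step1 i) then show ?case using s1 s1' eq by simp
  next
    case (step2 i)
    have "\<psi> (gmat 1 0 0, 2 * (i - 1)) * \<psi> (gmat 1 0 0, 2) = \<psi>' (gmat 1 0 0, 2 * (i - 1)) * \<psi> (gmat 1 0 0, 2)"
      using s2 s2' step2 eq by metis
    then show ?case using nz by simp
  qed
qed


context
  fixes f :: nat and z :: F4 and \<phi>1 \<phi>2 :: "elt \<Rightarrow> 'k::field_char_0"
  assumes oddf: "odd f" and z0: "z \<noteq> F0" and z1: "z \<noteq> F1"
    and ch1: "is_char (Csub z) (gmul f) \<phi>1" and ch2: "is_char C6Z (gmul f) \<phi>2"
    and w1: "\<phi>1 (gmat 1 0 1, 0) = -1" and w2: "\<phi>2 (gmat 1 0 1, 0) = -1"
    and w12: "\<phi>1 (gmat 1 0 0, 2) = \<phi>2 (gmat 1 0 0, 2)"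
begin

definition Psi :: "(elt \<Rightarrow> 'k) \<Rightarrow> (elt \<Rightarrow> 'k)" where
  "Psi F = (\<lambda>x. if x \<in> QZ then \<Sum>y\<in>S6. inverse (\<phi>2 y) * F (gmul f y x) else 0)"

lemma k12: "\<phi>1 (gmat 1 0 0, 2 * j) = \<phi>2 (gmat 1 0 0, 2 * j)"
  by (rule char_pow[OF oddf ch1 ch2 e2_Csub[OF z0 z1] e2_C6Z w12])

definition pp :: "elt \<Rightarrow> elt \<Rightarrow> elt" where
  "pp h y = (fst (gmul f y h), snd (gmul f y h) mod 2)"
definition kk :: "elt \<Rightarrow> elt \<Rightarrow> elt" where
  "kk h y = (gmat 1 0 0, 2 * (snd (gmul f y h) div 2))"

lemma S6_C6Z: "y \<in> S6 \<Longrightarrow> y \<in> C6Z" unfolding S6_def by simp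

lemma pp_S6: assumes "h \<in> C6Z" "y \<in> S6" shows "pp h y \<in> S6"
proof -
  have yh: "gmul f y h \<in> C6Z" by (rule C6Z_mul[OF oddf S6_C6Z[OF assms(2)] assms(1)])
  then have "pp h y \<in> C6Z" unfolding pp_def C6Z_def by (cases "gmul f y h") simp
  moreover have "snd (pp h y) = 0 \<or> snd (pp h y) = 1" unfolding pp_def by simp presburger
  ultimately show ?thesis unfolding S6_def by simp
qed

lemma kk_pp: assumes "h \<in> C6Z" "y \<in> S6" shows "gmul f y h = gmul f (kk h y) (pp h y)"
proof -
  have yh: "gmul f y h \<in> QZ" using C6Z_QZ C6Z_mul[OF oddf S6_C6Z[OF assms(2)] assms(1)] by blast
  have p: "pp h y \<in> QZ" using C6Z_QZ S6_C6Z pp_S6[OF assms] by blast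
  have "gmul f (kk h y) (pp h y) = (fst (pp h y), 2 * (snd (gmul f y h) div 2) + snd (pp h y))"
    unfolding kk_def by (rule e2_mul[OF oddf p])
  also have "\<dots> = gmul f y h" unfolding pp_def by (cases "gmul f y h") simp
  finally show ?thesis by simp
qed

lemma pp_inj: assumes "h \<in> C6Z" shows "inj_on (pp h) S6"
proof
  fix y1 y2 assume y1: "y1 \<in> S6" and y2: "y2 \<in> S6" and eq: "pp h y1 = pp h y2"
  have hq: "h \<in> QZ" using assms by (rule C6Z_QZ)
  obtain a1 c1 n1 where Y1: "y1 = (gmat a1 0 c1, n1)" "n1 = 0 \<or> n1 = 1" using y1 unfolding S6_def C6Z_iff by auto
  obtain a2 c2 n2 where Y2: "y2 = (gmat a2 0 c2, n2)" "n2 = 0 \<or> n2 = 1" using y2 unfolding S6_def C6Z_iff by auto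
  obtain ha hb hc hn where H: "h = (gmat ha hb hc, hn)" using assms unfolding C6Z_iff by blast
  have "snd (gmul f y1 h) mod 2 = snd (gmul f y2 h) mod 2" using eq unfolding pp_def by simp
  then have "(n1 + hn) mod 2 = (n2 + hn) mod 2" unfolding Y1 Y2 H gmul_def by simp
  then have n12: "n1 = n2" using Y1(2) Y2(2) by presburger
  have "gmul f y1 h = gmul f y2 h"
    using eq unfolding pp_def by (simp add: Y1 Y2 H gmul_def n12)
  then have "gmul f (gmul f y1 h) (ginv h) = gmul f (gmul f y2 h) (ginv h)" by simp
  moreover have "y1 \<in> QZ" "y2 \<in> QZ" using y1 y2 S6_C6Z C6Z_QZ by blast+
  ultimately show "y1 = y2"
    by (simp add: gmul_assoc[OF oddf, symmetric] ginv_right[OF oddf hq] eQ_right[OF oddf])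
qed

lemma pp_surj: assumes "h \<in> C6Z" shows "pp h ` S6 = S6"
  using endo_inj_surj[OF S6_finite _ pp_inj[OF assms]] pp_S6[OF assms] by blast

abbreviation "V1 \<equiv> Ind QZ (gmul f) (Csub z) \<phi>1"
abbreviation "V2 \<equiv> Ind QZ (gmul f) C6Z \<phi>2"

lemma Psi_V2: assumes F: "F \<in> V1" shows "Psi F \<in> V2"
  unfolding Ind_def
proof (intro CollectI conjI allI impI ballI)
  fix x assume "x \<notin> QZ" then show "Psi F x = 0" unfolding Psi_def by simp
next
  fix h x assume h: "h \<in> C6Z" and x: "x \<in> QZ"
  have hq: "h \<in> QZ" by (rule C6Z_QZ[OF h])
  have hx: "gmul f h x \<in> QZ" by (rule QZ_closed[OF oddf hq x])
  let ?g = "\<lambda>w. inverse (\<phi>2 w) * F (gmul f w x)"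
  have trm: "inverse (\<phi>2 y) * F (gmul f y (gmul f h x)) = \<phi>2 h * ?g (pp h y)" if y: "y \<in> S6" for y
  proof -
    have yC: "y \<in> C6Z" by (rule S6_C6Z[OF y])
    have pS: "pp h y \<in> S6" by (rule pp_S6[OF h y])
    have pC: "pp h y \<in> C6Z" by (rule S6_C6Z[OF pS])
    have pQ: "pp h y \<in> QZ" by (rule C6Z_QZ[OF pC])
    have kC: "kk h y \<in> C6Z" unfolding kk_def by (rule e2_C6Z)
    have kS: "kk h y \<in> Csub z" unfolding kk_def by (rule e2_Csub[OF z0 z1])
    have kp: "gmul f y h = gmul f (kk h y) (pp h y)" by (rule kk_pp[OF h y])
    have "F (gmul f y (gmul f h x)) = F (gmul f (kk h y) (gmul f (pp h y) x))"
      by (simp add: gmul_assoc[OF oddf] kp)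
    also have "\<dots> = \<phi>1 (kk h y) * F (gmul f (pp h y) x)"
      by (rule Ind_val[OF F kS QZ_closed[OF oddf pQ x]])
    finally have Fe: "F (gmul f y (gmul f h x)) = \<phi>1 (kk h y) * F (gmul f (pp h y) x)" .
    have "\<phi>2 y * \<phi>2 h = \<phi>2 (kk h y) * \<phi>2 (pp h y)"
      using char_mul[OF ch2 yC h] char_mul[OF ch2 kC pC] kp by simp
    moreover have "\<phi>1 (kk h y) = \<phi>2 (kk h y)" unfolding kk_def by (rule k12)
    moreover have "\<phi>2 y \<noteq> 0" "\<phi>2 (kk h y) \<noteq> 0" "\<phi>2 (pp h y) \<noteq> 0"
      using char_nz[OF ch2] yC kC pC by auto
    ultimately show ?thesis using Fe by (simp add: field_simps)
  qed
  have "Psi F (gmul f h x) = (\<Sum>y\<in>S6. \<phi>2 h * ?g (pp h y))"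
    unfolding Psi_def using hx trm by (simp cong: sum.cong)
  also have "\<dots> = \<phi>2 h * (\<Sum>y\<in>S6. ?g (pp h y))" by (simp add: sum_distrib_left)
  also have "(\<Sum>y\<in>S6. ?g (pp h y)) = (\<Sum>w\<in>pp h ` S6. ?g w)"
    using sum.reindex[OF pp_inj[OF h], of ?g] by simp
  also have "\<dots> = (\<Sum>w\<in>S6. ?g w)" using pp_surj[OF h] by simp
  also have "\<dots> = Psi F x" unfolding Psi_def using x by simp
  finally show "Psi F (gmul f h x) = \<phi>2 h * Psi F x" .
qed


lemma Psi_add: "Psi (\<lambda>x. F x + F' x) = (\<lambda>x. Psi F x + Psi F' x)"
  unfolding Psi_def by (rule ext) (simp add: distrib_left sum.distrib)

lemma Psi_smul: "Psi (\<lambda>x. c * F x) = (\<lambda>x. c * Psi F x)"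
  unfolding Psi_def by (rule ext) (simp add: sum_distrib_left algebra_simps)

lemma Psi_ract: assumes g: "g \<in> QZ" shows "Psi (ract QZ (gmul f) g F) = ract QZ (gmul f) g (Psi F)"
proof (rule ext)
  fix x show "Psi (ract QZ (gmul f) g F) x = ract QZ (gmul f) g (Psi F) x"
  proof (cases "x \<in> QZ")
    case True
    have xg: "gmul f x g \<in> QZ" by (rule QZ_closed[OF oddf True g])
    have "Psi (ract QZ (gmul f) g F) x = (\<Sum>y\<in>S6. inverse (\<phi>2 y) * F (gmul f (gmul f y x) g))"
      unfolding Psi_def using True
      by (simp add: ract_def QZ_closed[OF oddf C6Z_QZ[OF S6_C6Z] True] cong: sum.cong)
    also have "\<dots> = Psi F (gmul f x g)" unfolding Psi_def using xg by (simp add: gmul_assoc[OF oddf])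
    finally show ?thesis using True by (simp add: ract_def)
  next
    case False then show ?thesis by (simp add: Psi_def ract_def)
  qed
qed

lemma ract_V1: assumes F: "F \<in> V1" and g: "g \<in> QZ" shows "ract QZ (gmul f) g F \<in> V1"
  unfolding Ind_def
proof (intro CollectI conjI allI impI ballI)
  fix x assume "x \<notin> QZ" then show "ract QZ (gmul f) g F x = 0" by (simp add: ract_def)
next
  fix h x assume h: "h \<in> Csub z" and x: "x \<in> QZ"
  have hq: "h \<in> QZ" by (rule Csub_QZ[OF z0 z1 h])
  have hx: "gmul f h x \<in> QZ" by (rule QZ_closed[OF oddf hq x])
  have xg: "gmul f x g \<in> QZ" by (rule QZ_closed[OF oddf x g])
  have "ract QZ (gmul f) g F (gmul f h x) = F (gmul f h (gmul f x g))"
    using hx by (simp add: ract_def gmul_assoc[OF oddf])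
  also have "\<dots> = \<phi>1 h * F (gmul f x g)" by (rule Ind_val[OF F h xg])
  finally show "ract QZ (gmul f) g F (gmul f h x) = \<phi>1 h * ract QZ (gmul f) g F x"
    using x by (simp add: ract_def)
qed

lemma Psi_rep_hom: "rep_hom QZ (gmul f) V1 V2 Psi"
  unfolding rep_hom_def using Psi_V2 Psi_add Psi_smul Psi_ract by blast

definition Fz :: "elt \<Rightarrow> 'k" where "Fz = (\<lambda>x. if x \<in> Csub z then \<phi>1 x else 0)"

lemma Fz_V1: "Fz \<in> V1"
  unfolding Ind_def
proof (intro CollectI conjI allI impI ballI)
  fix x assume x: "x \<notin> QZ"
  have "x \<notin> Csub z"
  proof
    assume "x \<in> Csub z" then have "x \<in> QZ" by (rule Csub_QZ[OF z0 z1])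
    with x show False by simp
  qed
  then show "Fz x = 0" unfolding Fz_def by simp
next
  fix h x assume h: "h \<in> Csub z" and x: "x \<in> QZ"
  show "Fz (gmul f h x) = \<phi>1 h * Fz x"
  proof (cases "x \<in> Csub z")
    case True
    have hx: "gmul f h x \<in> Csub z" by (rule Csub_mul[OF oddf z0 z1 h True])
    have "\<phi>1 (gmul f h x) = \<phi>1 h * \<phi>1 x" by (rule char_mul[OF ch1 h True])
    then show ?thesis unfolding Fz_def using hx True by simp
  next
    case False
    have "gmul f h x \<notin> Csub z"
    proof
      assume "gmul f h x \<in> Csub z"
      then have "x \<in> Csub z" by (rule Csub_cancel[OF oddf z0 z1 h x])
      with False show False by simp
    qed
    then show ?thesis unfolding Fz_def using False by simp
  qed
qed

lemma Psi_F0: "Psi Fz eQ = 2"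
proof -
  have S: "S6 \<inter> Csub z = {(gmat 1 0 0, 0), (gmat 1 0 1, 0)}"
  proof (intro set_eqI iffI)
    fix y assume "y \<in> S6 \<inter> Csub z"
    then obtain a c n where y: "y = (gmat a 0 c, n)" "a \<noteq> 0" "c = 0 \<or> c = a" "n = 0 \<or> n = 1"
      and yc: "y \<in> Csub z" unfolding S6_def C6Z_iff by auto
    have "a = 1" "even n" using yc unfolding y Csub_gmat[OF z0 z1] by (auto simp: isF2_def)
    then show "y \<in> {(gmat 1 0 0, 0), (gmat 1 0 1, 0)}" using y by auto
  next
    fix y assume "y \<in> {(gmat 1 0 0, 0::int), (gmat 1 0 1, 0)}"
    then show "y \<in> S6 \<inter> Csub z"
      unfolding S6_def by (auto simp: C6Z_gmat Csub_gmat[OF z0 z1] Qcond_alt isF2_def)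
  qed
  have e1: "\<phi>1 (gmat 1 0 0, 0) = 1" "\<phi>2 (gmat 1 0 0, 0) = 1"
    using char_one[OF ch1, of "(gmat 1 0 0, 0)"] char_one[OF ch2, of "(gmat 1 0 0, 0)"]
    by (simp_all add: gmul_gmat[OF oddf] Csub_gmat[OF z0 z1] Qcond_alt isF2_def C6Z_gmat)
  have "Psi Fz eQ = (\<Sum>y\<in>S6. inverse (\<phi>2 y) * Fz y)"
    unfolding Psi_def using eQ_QZ[OF oddf]
    by (simp add: eQ_right[OF oddf C6Z_QZ[OF S6_C6Z]] cong: sum.cong)
  also have "\<dots> = (\<Sum>y\<in>S6. if y \<in> Csub z then inverse (\<phi>2 y) * \<phi>1 y else 0)"
    unfolding Fz_def by (intro sum.cong) auto
  also have "\<dots> = (\<Sum>y\<in>S6 \<inter> Csub z. inverse (\<phi>2 y) * \<phi>1 y)"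
    by (rule sum.inter_restrict[OF S6_finite, symmetric])
  also have "\<dots> = 2" unfolding S using e1 w1 w2 by simp
  finally show ?thesis .
qed

lemma Psi_onto: assumes irr: "irreducible_rep QZ (gmul f) V2" shows "Psi ` V1 = V2"
proof -
  let ?W = "Psi ` V1"
  have sub: "?W \<subseteq> V2" using Psi_V2 by blast
  have z1V: "(\<lambda>_. 0) \<in> V1" unfolding Ind_def by simp
  have "Psi (\<lambda>_. 0) = Psi (\<lambda>x. 0 * Fz x)" by simp
  also have "\<dots> = (\<lambda>_. 0)" unfolding Psi_smul by simp
  finally have p0: "Psi (\<lambda>_. 0) = (\<lambda>_. 0)" .
  have ss: "is_subspace ?W"
    unfolding is_subspace_def
  proof (intro conjI ballI allI)
    show "(\<lambda>_. 0) \<in> ?W" using z1V p0 by (metis image_eqI)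
  next
    fix G G' assume "G \<in> ?W" "G' \<in> ?W"
    then obtain F F' where F: "F \<in> V1" "G = Psi F" and F': "F' \<in> V1" "G' = Psi F'" by blast
    have mem: "(\<lambda>x. F x + F' x) \<in> V1" using F(1) F'(1) unfolding Ind_def by (simp add: distrib_left)
    have eq: "(\<lambda>x. G x + G' x) = Psi (\<lambda>x. F x + F' x)" by (simp add: F(2) F'(2) Psi_add)
    show "(\<lambda>x. G x + G' x) \<in> ?W" by (rule image_eqI[where f = Psi, OF eq mem])
  next
    fix c G assume "G \<in> ?W"
    then obtain F where F: "F \<in> V1" "G = Psi F" by blast
    have mem: "(\<lambda>x. c * F x) \<in> V1" using F(1) unfolding Ind_def by (simp add: algebra_simps)
    have eq: "(\<lambda>x. c * G x) = Psi (\<lambda>x. c * F x)" by (simp add: F(2) Psi_smul)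
    show "(\<lambda>x. c * G x) \<in> ?W" by (rule image_eqI[where f = Psi, OF eq mem])
  qed
  have inv: "\<forall>g\<in>QZ. \<forall>G\<in>?W. ract QZ (gmul f) g G \<in> ?W"
  proof (intro ballI)
    fix g G assume g: "g \<in> QZ" and "G \<in> ?W"
    then obtain F where F: "F \<in> V1" "G = Psi F" by blast
    have "ract QZ (gmul f) g G = Psi (ract QZ (gmul f) g F)" by (simp add: F(2) Psi_ract[OF g])
    then show "ract QZ (gmul f) g G \<in> ?W" using ract_V1[OF F(1) g] by simp
  qed
  have "Psi Fz \<in> ?W" using Fz_V1 by simp
  moreover have "Psi Fz \<noteq> (\<lambda>_. 0)"
  proof
    assume "Psi Fz = (\<lambda>_. 0)" then have "Psi Fz eQ = 0" by simp
    then show False using Psi_F0 by simp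
  qed
  ultimately have "?W \<noteq> {\<lambda>_. 0}" by blast
  then show ?thesis using irr ss sub inv unfolding irreducible_rep_def by blast
qed

end

lemma eta4:
  fixes s \<eta> q :: "'k::field_char_0" and f :: nat
  assumes oddf: "odd f" and s2: "s ^ 2 = -2" and q: "q = of_nat (2 ^ f)"
    and eta: "\<eta> ^ 2 + s ^ (f + 1) * \<eta> + q = 0"
  shows "\<eta> ^ 4 = - (q * q)"
proof -
  obtain k where k: "f + 1 = 2 * k" using oddf by (metis oddE add_Suc_right Suc_eq_plus1 mult_Suc_right one_add_one add.commute)
  have "(s ^ (f + 1)) ^ 2 = (s ^ 2) ^ (f + 1)" by (metis power_mult mult.commute)
  also have "\<dots> = (-2) ^ (f + 1)" using s2 by simp
  also have "\<dots> = 2 ^ (f + 1)" using k by (simp add: power_mult)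
  also have "\<dots> = 2 * q" using q by simp
  finally have S: "(s ^ (f + 1)) ^ 2 = 2 * q" .
  have e2: "\<eta> ^ 2 = - (s ^ (f + 1) * \<eta> + q)" using eta by (simp add: algebra_simps eq_neg_iff_add_eq_0)
  have "\<eta> ^ 4 = (\<eta> ^ 2) ^ 2" by simp
  also have "\<dots> = (s ^ (f + 1) * \<eta> + q) ^ 2" by (simp only: e2 power2_minus)
  also have "\<dots> = (s ^ (f + 1)) ^ 2 * \<eta> ^ 2 + 2 * q * (s ^ (f + 1) * \<eta>) + q * q"
    by (simp add: power2_eq_square algebra_simps)
  also have "\<dots> = 2 * q * (\<eta> ^ 2 + s ^ (f + 1) * \<eta>) + q * q" unfolding S by (simp add: algebra_simps)
  also have "\<dots> = - (q * q)"
  proof -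
    have h: "\<eta> ^ 2 + s ^ (f + 1) * \<eta> = - q" using eta by (simp add: eq_neg_iff_add_eq_0)
    show ?thesis unfolding h by (simp add: algebra_simps)
  qed
  finally show ?thesis .
qed

theorem lemma3p1:
  fixes f :: nat and z :: F4
    and \<phi> :: "mat3 \<Rightarrow> 'k::field_char_0"
    and s \<eta> :: 'k
    and \<phi>1 \<phi>2 :: "elt \<Rightarrow> 'k"
  assumes "alg_closed TYPE('k)"
    and "odd f"
    and "z \<noteq> F0" and "z \<noteq> F1"
    and "is_char (C4 z) mmul \<phi>" and "inj_on \<phi> (C4 z)"
    and "s ^ 2 = -2"
    and "\<eta> ^ 2 + s ^ (f + 1) * \<eta> + of_nat (2 ^ f) = 0"
    and "is_char (Csub z) (gmul f) \<phi>1"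
    and "\<phi>1 (gmat F1 z z, 1) = \<eta> / of_nat (2 ^ f)"
    and "\<phi>1 (gmat F1 F0 F0, 2) = - 1 / of_nat (2 ^ f)"
    and "is_char C6Z (gmul f) \<phi>2"
    and "\<forall>x\<in>Zc. \<forall>y\<in>C3. \<phi>2 (mmul x y, 0) = \<phi> x"
    and "\<phi>2 (gmat F1 F0 F0, 1) = s ^ f / of_nat (2 ^ f)"
  shows "irreducible_rep QZ (gmul f) (Ind QZ (gmul f) C6Z \<phi>2)
    \<and> (\<exists>\<Psi>. rep_hom QZ (gmul f) (Ind QZ (gmul f) (Csub z) \<phi>1) (Ind QZ (gmul f) C6Z \<phi>2) \<Psi>
           \<and> \<Psi> ` (Ind QZ (gmul f) (Csub z) \<phi>1) = Ind QZ (gmul f) C6Z \<phi>2)"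
proof -
  note A = assms
  have oddf: "odd f" by (rule A(2))
  have z0: "z \<noteq> F0" and z1: "z \<noteq> F1" by (rule A(3), rule A(4))
  have zz: "z = Zt \<or> z = Zt2" using z0 z1 by (cases z) auto
  define q :: 'k where "q = of_nat (2 ^ f)"
  have qnz: "q \<noteq> 0" unfolding q_def by simp
  define t :: 'k where "t = s ^ f / q"
  have ch: "is_char (C4 z) mmul \<phi>" by (rule A(5))
  have ch1: "is_char (Csub z) (gmul f) \<phi>1" by (rule A(9))
  have ch2: "is_char C6Z (gmul f) \<phi>2" by (rule A(12))
  have eC4: "gmat 1 0 0 \<in> C4 z" and zC4: "gmat 1 0 1 \<in> C4 z"
    unfolding C4_iff[OF z0 z1] by (auto simp: Qcond_alt isF2_def)
  have ee: "mmul (gmat 1 0 0) (gmat 1 0 0) = gmat 1 0 0" and zz2: "mmul (gmat 1 0 1) (gmat 1 0 1) = gmat 1 0 0"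
    by (simp_all add: gmat_mul)
  have phe: "\<phi> (gmat 1 0 0) = 1" by (rule char_one[OF ch eC4 ee])
  have phz: "\<phi> (gmat 1 0 1) = -1"
  proof -
    have "\<phi> (gmat 1 0 1) * \<phi> (gmat 1 0 1) = 1" using char_mul[OF ch zC4 zC4] zz2 phe by simp
    then have "(\<phi> (gmat 1 0 1) - 1) * (\<phi> (gmat 1 0 1) + 1) = 0" by (simp add: algebra_simps)
    moreover have "\<phi> (gmat 1 0 1) \<noteq> 1"
    proof
      assume "\<phi> (gmat 1 0 1) = 1"
      then have "gmat 1 0 1 = gmat 1 0 0" using A(6) eC4 zC4 phe by (metis inj_on_def)
      then show False by simp
    qed
    ultimately show ?thesis by (simp add: eq_neg_iff_add_eq_0)
  qed
  have hyp: "\<And>x y. x \<in> Zc \<Longrightarrow> y \<in> C3 \<Longrightarrow> \<phi>2 (mmul x y, 0) = \<phi> x" using A(13) by blast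
  have Zc1: "gmat 1 0 0 \<in> Zc" and Zc2: "gmat 1 0 1 \<in> Zc" unfolding Zc_def F0_eq F1_eq by simp_all
  have C31: "gmat 1 0 0 \<in> C3" and C32: "gmat Zt 0 0 \<in> C3" unfolding C3_def F0_eq by auto
  have v1: "\<phi>2 (gmat 1 0 0, 0) = 1" using hyp[OF Zc1 C31] phe by (simp add: gmat_mul)
  have v2: "\<phi>2 (gmat 1 0 1, 0) = -1" using hyp[OF Zc2 C31] phz by (simp add: gmat_mul)
  have v3: "\<phi>2 (gmat Zt 0 0, 0) = 1" using hyp[OF Zc1 C32] phe by (simp add: gmat_mul)
  have v4: "\<phi>2 (gmat 1 0 0, 1) = t" using A(14) unfolding t_def q_def F0_eq F1_eq .
  have v5: "\<phi>2 (gmat 1 0 1, 1) = - t"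
  proof -
    have "gmul f (gmat 1 0 1, 0) (gmat 1 0 0, 1) = (gmat 1 0 1, 1)" by (simp add: gmul_gmat[OF oddf])
    moreover have "(gmat 1 0 1, 0::int) \<in> C6Z" "(gmat 1 0 0, 1::int) \<in> C6Z" by (simp_all add: C6Z_gmat)
    ultimately show ?thesis using char_mul[OF ch2, of "(gmat 1 0 1, 0)" "(gmat 1 0 0, 1)"] v2 v4 by simp
  qed
  have tnz: "t \<noteq> 0" using char_nz[OF ch2, of "(gmat 1 0 0, 1)"] v4 by (simp add: C6Z_gmat)
  have irr: "irreducible_rep QZ (gmul f) (Ind QZ (gmul f) C6Z \<phi>2)"
    by (rule irred[OF oddf ch2 v1 v2 v3 v4 v5 tnz])
  have w12: "\<phi>1 (gmat 1 0 0, 2) = \<phi>2 (gmat 1 0 0, 2)"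
  proof -
    have m: "gmul f (gmat 1 0 0, 1) (gmat 1 0 0, 1) = (gmat 1 0 0, 2)" by (simp add: gmul_gmat[OF oddf])
    have "\<phi>2 (gmat 1 0 0, 2) = t * t"
      using char_mul[OF ch2, of "(gmat 1 0 0, 1)" "(gmat 1 0 0, 1)"] m v4 by (simp add: C6Z_gmat)
    also have "t * t = (s ^ 2) ^ f / (q * q)" unfolding t_def by (simp add: power_mult_distrib power_mult[symmetric] mult.commute power2_eq_square)
    also have "\<dots> = - q / (q * q)" using oddf A(7) unfolding q_def by simp
    also have "\<dots> = - 1 / q" using qnz by simp
    finally show ?thesis using A(11) unfolding q_def F0_eq F1_eq by simp
  qed
  have w1: "\<phi>1 (gmat 1 0 1, 0) = -1"
  proof -
    let ?a = "(gmat 1 z z, 1::int)"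
    have zz3: "z * z + z = 1" "z * (z * (z * z)) = z" using zz by auto
    have aC: "?a \<in> Csub z" unfolding Csub_gmat[OF z0 z1] using zz by (auto simp: Qcond_alt isF2_def)
    have a2: "gmul f ?a ?a = (gmat 1 1 z, 2)" using zz by (auto simp: gmul_gmat[OF oddf] tw'_def frb_def)
    have bC: "(gmat 1 1 z, 2::int) \<in> Csub z" unfolding Csub_gmat[OF z0 z1] using zz by (auto simp: Qcond_alt isF2_def)
    have b2: "gmul f (gmat 1 1 z, 2) (gmat 1 1 z, 2) = (gmat 1 0 1, 4)" using zz by (auto simp: gmul_gmat[OF oddf])
    have eC: "(gmat 1 0 0, 2::int) \<in> Csub z" and zC: "(gmat 1 0 1, 0::int) \<in> Csub z"
      unfolding Csub_gmat[OF z0 z1] by (auto simp: Qcond_alt isF2_def)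
    have c4: "(gmat 1 0 1, 4::int) = gmul f (gmat 1 0 1, 0) (gmul f (gmat 1 0 0, 2) (gmat 1 0 0, 2))"
      by (simp add: gmul_gmat[OF oddf])
    have e22: "gmul f (gmat 1 0 0, 2) (gmat 1 0 0, 2) \<in> Csub z" by (rule Csub_mul[OF oddf z0 z1 eC eC])
    have pa: "\<phi>1 ?a = \<eta> / q" using A(10) unfolding q_def F1_eq .
    have pe: "\<phi>1 (gmat 1 0 0, 2) = - 1 / q" using A(11) unfolding q_def F0_eq F1_eq .
    have "\<phi>1 (gmat 1 0 1, 4) = (\<phi>1 ?a * \<phi>1 ?a) * (\<phi>1 ?a * \<phi>1 ?a)"
      using char_mul[OF ch1 aC aC] char_mul[OF ch1 bC bC] a2 b2 by simp
    moreover have "\<phi>1 (gmat 1 0 1, 4) = \<phi>1 (gmat 1 0 1, 0) * (\<phi>1 (gmat 1 0 0, 2) * \<phi>1 (gmat 1 0 0, 2))"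
      using c4 char_mul[OF ch1 zC e22] char_mul[OF ch1 eC eC] by simp
    ultimately have "\<phi>1 (gmat 1 0 1, 0) * (1 / (q * q)) = \<eta> ^ 4 / (q * q * q * q)"
      unfolding pa pe by (simp add: power4_eq_xxxx field_simps)
    moreover have "\<eta> ^ 4 = - (q * q)" by (rule eta4[OF oddf A(7) q_def]) (use A(8) q_def in simp)
    ultimately show ?thesis using qnz by (simp add: field_simps)
  qed
  have hom: "rep_hom QZ (gmul f) (Ind QZ (gmul f) (Csub z) \<phi>1) (Ind QZ (gmul f) C6Z \<phi>2) (Psi f \<phi>2)"
    by (rule Psi_rep_hom[OF oddf z0 z1 ch1 ch2 w1 v2 w12])
  have onto: "Psi f \<phi>2 ` (Ind QZ (gmul f) (Csub z) \<phi>1) = Ind QZ (gmul f) C6Z \<phi>2"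
    by (rule Psi_onto[OF oddf z0 z1 ch1 ch2 w1 v2 w12 irr])
  show ?thesis using irr hom onto by blast
qed

end
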